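(* Let $G\subseteq \mathrm{GL}(N)$ be a quadratic matrix Lie group with reductive Lie algebra $\mathfrak{g}$, and $B:\mathfrak{g}\to\mathfrak{g}$ smooth. Consider the canonical Hamiltonian system on $T^*G$ (points written as pairs of $N\times N$ matrices $(g,p)$) $$\dot g=g\,B(g^\dagger p)^\dagger,\qquad \dot p=-p\,B(g^\dagger p),$$ and apply an $s$-stage SDIRK method with weights $b_i$, step $h$, $h_i=hb_i$, written as follows: with $g_{n,r_0}=g_n$, $p_{n,r_0}=p_n$, for $i=1,\dots,s$ the stage slopes $k^g_{n,i},k^p_{n,i}$ satisfy $$k^g_{n,i}=\Big(g_{n,r_{i-1}}+\tfrac{h_i}{2}k^g_{n,i}\Big)B(\mu_{n,c_i})^\dagger,\qquad k^p_{n,i}=-\Big(p_{n,r_{i-1}}+\tfrac{h_i}{2}k^p_{n,i}\Big)B(\mu_{n,c_i}),$$ $$\mu_{n,c_i}=\Big(g_{n,r_{i-1}}+\tfrac{h_i}{2}k^g_{n,i}\Big)^{\dagger}\Big(p_{n,r_{i-1}}+\tfrac{h_i}{2}k^p_{n,i}\Big),$$ and $g_{n,r_i}=g_{n,r_{i-1}}+h_ik^g_{n,i}$, $p_{n,r_i}=p_{n,r_{i-1}}+h_ik^p_{n,i}$, $g_{n+1}=g_{n,r_s}$, $p_{n+1}=p_{n,r_s}$. Write $B_i=B(\mu_{n,c_i})$ and assume $\mathrm{Id}\pm\tfrac{h_i}{2}B_i$ are invertible. Then $$g_{n,r_i}=g_{n,r_{i-1}}\,\mathrm{cay}(h_iB_i^\dagger),\qquad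 p_{n,r_i}=p_{n,r_{i-1}}\,\mathrm{cay}(h_iB_i)^{-1},$$ hence $g_{n+1}=g_n\prod_{i=1}^s\mathrm{cay}(h_iB_i^\dagger)$ and $p_{n+1}=p_n\prod_{i=1}^s\mathrm{cay}(h_iB_i)^{-1}$. Moreover, with $\mu_{n,r_i}:=g_{n,r_i}^\dagger p_{n,r_i}$, $$\mu_{n,r_i}=\mathrm{cay}(h_iB_i)\,\mu_{n,r_{i-1}}\,\mathrm{cay}(h_iB_i)^{-1},\qquad \mu_{n,c_i}=\Big(\mathrm{Id}-\tfrac{h_i}{2}B_i\Big)^{-1}\mu_{n,r_{i-1}}\Big(\mathrm{Id}+\tfrac{h_i}{2}B_i\Big)^{-1},$$ so that $\mu_{n,r_{i-1}}=(\mathrm{Id}-\tfrac{h_i}{2}B_i)\mu_{n,c_i}(\mathrm{Id}+\tfrac{h_i}{2}B_i)$ and $\mu_{n,r_i}=(\mathrm{Id}+\tfrac{h_i}{2}B_i)\mu_{n,c_i}(\mathrm{Id}-\tfrac{h_i}{2}B_i)$. Also $\mu_{n,c_i}=g_{n,c_i}^\dagger p_{n,c_i}$ with $g_{n,c_i}=\tfrac12(g_{n,r_{i-1}}+g_{n,r_i})$ and $p_{n,c_i}=\tfrac12(p_{n,r_{i-1}}+p_{n,r_i})$.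
   Context: $\dagger$ denotes conjugate transpose; $\mathrm{cay}(\xi)=(\mathrm{Id}-\xi/2)^{-1}(\mathrm{Id}+\xi/2)$. A quadratic matrix Lie group is $G\subseteq\mathrm{GL}(N)$ defined by a quadratic relation with a fixed matrix $J$ (e.g. $\mathrm{O}(n)$, $\mathrm{SO}(n)$, $\mathrm{Sp}(2N)$); its Lie algebra elements satisfy $J\xi+\xi^\dagger J=0$. Reductive means $[\mathfrak{g}^\dagger,\mathfrak{g}]\subset\mathfrak{g}$. The Hamiltonian system above is the reconstruction of the Lie–Poisson system $\dot\mu=[B(\mu),\mu]$, $B=\nabla H^\dagger$, via the momentum map $\mu=g^\dagger p$. An $s$-stage SDIRK has $a_{ij}=b_j$ ($j<i$), $a_{ii}=b_i/2$, $a_{ij}=0$ ($j>i$), weights $b_i$ with $\sum b_i=1$. *)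

theory Defs
  imports "HOL-Analysis.Analysis"
begin

type_synonym 'n cmat = "complex ^'n ^'n"

definition ct :: "'n::finite cmat \<Rightarrow> 'n cmat" where
  "ct A = (\<chi> i j. cnj (A $ j $ i))"

definition cay :: "'n::finite cmat \<Rightarrow> 'n cmat" where
  "cay X = matrix_inv (mat 1 - (1/2::real) *\<^sub>R X) ** (mat 1 + (1/2::real) *\<^sub>R X)"

definition quad_group :: "'n::finite cmat \<Rightarrow> 'n cmat set" where
  "quad_group J = {g. invertible g \<and> ct g ** J ** g = J}"

definition quad_lie_alg :: "'n::finite cmat \<Rightarrow> 'n cmat set" where
  "quad_lie_alg J = {X. J ** X + ct X ** J = 0}"

definition reductive :: "'n::finite cmat set \<Rightarrow> bool" where
  "reductive L \<longleftrightarrow> (\<forall>X\<in>L. \<forall>Y\<in>L. ct X ** Y - Y ** ct X \<in> L)"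

fun Ck :: "nat \<Rightarrow> ('a::real_normed_vector \<Rightarrow> 'b::real_normed_vector) \<Rightarrow> bool" where
  "Ck 0 f = True"
| "Ck (Suc k) f = ((\<forall>x. f differentiable (at x)) \<and>
      (\<forall>v. Ck k (\<lambda>x. frechet_derivative f (at x) v)))"

definition smooth :: "('a::real_normed_vector \<Rightarrow> 'b::real_normed_vector) \<Rightarrow> bool" where
  "smooth f \<longleftrightarrow> (\<forall>k. Ck k f)"

fun oprod :: "(nat \<Rightarrow> 'n::finite cmat) \<Rightarrow> nat \<Rightarrow> 'n cmat" where
  "oprod F 0 = mat 1"
| "oprod F (Suc k) = oprod F k ** F (Suc k)"

end

theory Submission
  imports Defs
begin


lemma mm_radd: "((A::'n::finite cmat) + B) ** C = A ** C + B ** C"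
  by (simp add: matrix_matrix_mult_def vec_eq_iff sum.distrib distrib_right)
lemma mm_rdiff: "((A::'n::finite cmat) - B) ** C = A ** C - B ** C"
  by (simp add: matrix_matrix_mult_def vec_eq_iff sum_subtractf left_diff_distrib)
lemma mm_ldiff: "(C::'n::finite cmat) ** (A - B) = C ** A - C ** B"
  by (simp add: matrix_matrix_mult_def vec_eq_iff sum_subtractf right_diff_distrib)
lemma mm_rneg: "(- (A::'n::finite cmat)) ** C = - (A ** C)"
  by (simp add: matrix_matrix_mult_def vec_eq_iff sum_negf)
lemma mm_sR_l: "((k::real) *\<^sub>R (A::'n::finite cmat)) ** B = k *\<^sub>R (A ** B)"
  by (simp add: scalar_matrix_assoc)
lemma mm_sR_r: "(A::'n::finite cmat) ** ((k::real) *\<^sub>R B) = k *\<^sub>R (A ** B)"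
  by (simp add: matrix_matrix_mult_def vec_eq_iff scaleR_sum_right)

lemma ct_mult: "ct ((A::'n::finite cmat) ** B) = ct B ** ct A"
  by (simp add: ct_def matrix_matrix_mult_def vec_eq_iff mult.commute)
lemma ct_add: "ct ((A::'n::finite cmat) + B) = ct A + ct B"
  by (simp add: ct_def vec_eq_iff)
lemma ct_diff: "ct ((A::'n::finite cmat) - B) = ct A - ct B"
  by (simp add: ct_def vec_eq_iff)
lemma ct_sR: "ct ((k::real) *\<^sub>R (A::'n::finite cmat)) = k *\<^sub>R ct A"
  by (simp add: ct_def vec_eq_iff)
lemma ct_one: "ct (mat 1 :: 'n::finite cmat) = mat 1"
  by (simp add: ct_def vec_eq_iff mat_def)
lemma ct_ct: "ct (ct (A::'n::finite cmat)) = A"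
  by (simp add: ct_def vec_eq_iff)

lemma minv: assumes "invertible (A::'n::finite cmat)"
  shows "A ** matrix_inv A = mat 1 \<and> matrix_inv A ** A = mat 1"
  using assms unfolding invertible_def matrix_inv_def by (rule someI_ex)

lemma minv_uniq: assumes "(A::'n::finite cmat) ** X = mat 1"
  shows "matrix_inv A = X"
proof -
  have "X ** A = mat 1" using assms matrix_left_right_inverse by blast
  hence inv: "invertible A" using assms invertible_def by blast
  from minv[OF inv] have "matrix_inv A = matrix_inv A ** (A ** X)" using assms by simp
  also have "\<dots> = X" using minv[OF inv] by (simp add: matrix_mul_assoc)
  finally show ?thesis .
qed

lemma ct_inv: assumes "invertible (A::'n::finite cmat)"
  shows "ct (matrix_inv A) = matrix_inv (ct A)"
proof -
  have "ct A ** ct (matrix_inv A) = mat 1"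
    using minv[OF assms] by (simp add: ct_mult[symmetric] ct_one)
  thus ?thesis using minv_uniq by metis
qed

lemma step_lemma:
  fixes g p kg kp Bm mc gn pn :: "'n::finite cmat" and hh a :: real
  assumes a: "a = hh / 2"
    and mcd: "mc = ct (g + a *\<^sub>R kg) ** (p + a *\<^sub>R kp)"
    and kge: "kg = (g + a *\<^sub>R kg) ** ct Bm"
    and kpe: "kp = - ((p + a *\<^sub>R kp) ** Bm)"
    and gn: "gn = g + hh *\<^sub>R kg"
    and pn: "pn = p + hh *\<^sub>R kp"
    and iM: "invertible (mat 1 - a *\<^sub>R Bm)"
    and iP: "invertible (mat 1 + a *\<^sub>R Bm)"
  shows "gn = g ** cay (hh *\<^sub>R ct Bm)
          \<and> pn = p ** matrix_inv (cay (hh *\<^sub>R Bm))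
          \<and> ct gn ** pn
              = cay (hh *\<^sub>R Bm) ** (ct g ** p) ** matrix_inv (cay (hh *\<^sub>R Bm))
          \<and> mc = matrix_inv (mat 1 - a *\<^sub>R Bm) ** (ct g ** p) ** matrix_inv (mat 1 + a *\<^sub>R Bm)
          \<and> ct g ** p = (mat 1 - a *\<^sub>R Bm) ** mc ** (mat 1 + a *\<^sub>R Bm)
          \<and> ct gn ** pn = (mat 1 + a *\<^sub>R Bm) ** mc ** (mat 1 - a *\<^sub>R Bm)
          \<and> mc = ct ((1/2::real) *\<^sub>R (g + gn)) ** ((1/2::real) *\<^sub>R (p + pn))"
proof -
  define M where "M = mat 1 - a *\<^sub>R Bm"
  define P where "P = mat 1 + a *\<^sub>R Bm"
  define Mi where "Mi = matrix_inv M"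
  define Pi where "Pi = matrix_inv P"
  define G where "G = g + a *\<^sub>R kg"
  define Q where "Q = p + a *\<^sub>R kp"
  have M1: "M ** Mi = mat 1" "Mi ** M = mat 1" using minv[OF iM] unfolding M_def Mi_def by auto
  have P1: "P ** Pi = mat 1" "Pi ** P = mat 1" using minv[OF iP] unfolding P_def Pi_def by auto
  have ctM: "ct M = mat 1 - a *\<^sub>R ct Bm" by (simp add: M_def ct_diff ct_sR ct_one)
  have ctP: "ct P = mat 1 + a *\<^sub>R ct Bm" by (simp add: P_def ct_add ct_sR ct_one)
  have ctMi: "ct Mi = matrix_inv (ct M)" unfolding Mi_def using iM M_def ct_inv by blast
  have ctM1: "ct M ** ct Mi = mat 1" using M1(2) by (metis ct_mult ct_one)
  have hsc: "\<And>X. (1/2::real) *\<^sub>R (hh *\<^sub>R X) = a *\<^sub>R (X::'n cmat)" using a by simp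
  have cay1: "cay (hh *\<^sub>R ct Bm) = ct Mi ** ct P"
    unfolding cay_def hsc ctMi ctM ctP ..
  have cay2: "cay (hh *\<^sub>R Bm) = Mi ** P"
    unfolding cay_def hsc Mi_def M_def P_def ..
  have cayinv: "matrix_inv (cay (hh *\<^sub>R Bm)) = Pi ** M"
    unfolding cay2 by (rule minv_uniq) (metis M1(2) P1(1) matrix_mul_assoc matrix_mul_lid)
  have kgG: "kg = G ** ct Bm" using kge G_def by simp
  have kpQ: "kp = - (Q ** Bm)" using kpe Q_def by simp
  have GM: "G ** ct M = g"
    using kgG unfolding ctM G_def
    by (simp add: matrix_add_ldistrib mm_radd mm_ldiff mm_rdiff mm_sR_l mm_sR_r algebra_simps)
  have h0: "kp + a *\<^sub>R (kp ** Bm) + p ** Bm = 0"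
    using kpQ unfolding Q_def by (simp add: mm_radd mm_sR_l algebra_simps)
  have "Q ** P = p + a *\<^sub>R (kp + a *\<^sub>R (kp ** Bm) + p ** Bm)"
    unfolding P_def Q_def
    by (simp add: matrix_add_ldistrib mm_radd mm_sR_l mm_sR_r algebra_simps)
  hence QP: "Q ** P = p" using h0 by simp
  have Gg: "G = g ** ct Mi" using GM ctM1 by (metis matrix_mul_assoc matrix_mul_rid)
  have Qp: "Q = p ** Pi" using QP P1 by (metis matrix_mul_assoc matrix_mul_rid)
  have hh2: "hh *\<^sub>R (X::'n cmat) = a *\<^sub>R X + a *\<^sub>R X" for X
    using a by (simp add: scaleR_add_left[symmetric])
  have "G ** ct P = G + a *\<^sub>R kg"
    unfolding ctP kgG by (simp add: matrix_add_ldistrib mm_sR_r)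
  hence gnG: "gn = G ** ct P" unfolding gn hh2 G_def by simp
  have "Q ** M = Q + a *\<^sub>R kp"
    unfolding M_def kpQ by (simp add: mm_ldiff mm_sR_r)
  hence pnQ: "pn = Q ** M" unfolding pn hh2 Q_def by simp
  have mcGQ: "mc = ct G ** Q" using mcd G_def Q_def by simp
  have mc4: "mc = Mi ** (ct g ** p) ** Pi"
    unfolding mcGQ Gg Qp ct_mult ct_ct by (simp add: matrix_mul_assoc)
  have mc5: "ct g ** p = M ** mc ** P"
    unfolding mc4 by (metis M1(1) P1(2) matrix_mul_assoc matrix_mul_lid matrix_mul_rid)
  have mc6: "ct gn ** pn = P ** mc ** M"
    unfolding gnG pnQ ct_mult ct_ct mcGQ by (simp add: matrix_mul_assoc)
  have PM: "P ** M = M ** P"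
    unfolding P_def M_def
    by (simp add: matrix_add_ldistrib mm_ldiff mm_radd mm_rdiff mm_sR_l mm_sR_r algebra_simps)
  have mc3: "ct gn ** pn = (Mi ** P) ** (ct g ** p) ** (Pi ** M)"
  proof -
    have "(Mi ** P) ** (ct g ** p) ** (Pi ** M) = Mi ** (P ** M) ** mc ** (P ** Pi) ** M"
      unfolding mc5 by (simp add: matrix_mul_assoc)
    also have "\<dots> = (Mi ** M) ** P ** mc ** M" unfolding PM P1 by (simp add: matrix_mul_assoc)
    also have "\<dots> = P ** mc ** M" using M1 by simp
    finally show ?thesis using mc6 by simp
  qed
  have half: "(1/2::real) *\<^sub>R (g + gn) = G" "(1/2::real) *\<^sub>R (p + pn) = Q"
  proof -
    have hlf: "(1/2::real) *\<^sub>R (X + X) = (X::'n cmat)" for X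
      by (simp add: scaleR_2[symmetric])
    have "g + gn = G + G" "p + pn = Q + Q" unfolding gn pn hh2 G_def Q_def by (simp_all add: algebra_simps)
    thus "(1/2::real) *\<^sub>R (g + gn) = G" "(1/2::real) *\<^sub>R (p + pn) = Q" using hlf by simp_all
  qed
  have f1: "gn = g ** (ct Mi ** ct P)" using gnG Gg by (simp add: matrix_mul_assoc)
  have f2: "pn = p ** (Pi ** M)" using pnQ Qp by (simp add: matrix_mul_assoc)
  have f7: "mc = ct ((1/2::real) *\<^sub>R (g + gn)) ** ((1/2::real) *\<^sub>R (p + pn))"
    unfolding half by (rule mcGQ)
  show ?thesis
    unfolding cayinv unfolding cay1 cay2 M_def[symmetric] P_def[symmetric] Mi_def[symmetric] Pi_def[symmetric]
    using f1 f2 mc3 mc4 mc5 mc6 f7 by blast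
qed

theorem mainTheorem2:
  fixes J :: "'n::finite cmat"
    and B :: "'n cmat \<Rightarrow> 'n cmat"
    and s :: nat and b :: "nat \<Rightarrow> real" and h :: real and hh :: "nat \<Rightarrow> real"
    and gr pr kg kp mc :: "nat \<Rightarrow> 'n cmat"
  assumes J_inv: "invertible J"
    and red: "reductive (quad_lie_alg J)"
    and B_alg: "\<And>X. X \<in> quad_lie_alg J \<Longrightarrow> B X \<in> quad_lie_alg J"
    and B_smooth: "smooth B"
    and g0_G: "gr 0 \<in> quad_group J"
    and b_sum: "(\<Sum>i=1..s. b i) = 1"
    and hh_def: "\<And>i. hh i = h * b i"
    and mc_def: "\<And>i. i \<in> {1..s} \<Longrightarrow>
        mc i = ct (gr (i - 1) + (hh i / 2) *\<^sub>R kg i) ** (pr (i - 1) + (hh i / 2) *\<^sub>R kp i)"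
    and kg_eq: "\<And>i. i \<in> {1..s} \<Longrightarrow>
        kg i = (gr (i - 1) + (hh i / 2) *\<^sub>R kg i) ** ct (B (mc i))"
    and kp_eq: "\<And>i. i \<in> {1..s} \<Longrightarrow>
        kp i = - ((pr (i - 1) + (hh i / 2) *\<^sub>R kp i) ** B (mc i))"
    and gr_step: "\<And>i. i \<in> {1..s} \<Longrightarrow> gr i = gr (i - 1) + hh i *\<^sub>R kg i"
    and pr_step: "\<And>i. i \<in> {1..s} \<Longrightarrow> pr i = pr (i - 1) + hh i *\<^sub>R kp i"
    and inv_minus: "\<And>i. i \<in> {1..s} \<Longrightarrow> invertible (mat 1 - (hh i / 2) *\<^sub>R B (mc i))"
    and inv_plus: "\<And>i. i \<in> {1..s} \<Longrightarrow> invertible (mat 1 + (hh i / 2) *\<^sub>R B (mc i))"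
  shows "(\<forall>i\<in>{1..s}.
            gr i = gr (i - 1) ** cay (hh i *\<^sub>R ct (B (mc i)))
          \<and> pr i = pr (i - 1) ** matrix_inv (cay (hh i *\<^sub>R B (mc i)))
          \<and> ct (gr i) ** pr i
              = cay (hh i *\<^sub>R B (mc i)) ** (ct (gr (i - 1)) ** pr (i - 1))
                  ** matrix_inv (cay (hh i *\<^sub>R B (mc i)))
          \<and> mc i = matrix_inv (mat 1 - (hh i / 2) *\<^sub>R B (mc i)) ** (ct (gr (i - 1)) ** pr (i - 1))
                  ** matrix_inv (mat 1 + (hh i / 2) *\<^sub>R B (mc i))
          \<and> ct (gr (i - 1)) ** pr (i - 1)
              = (mat 1 - (hh i / 2) *\<^sub>R B (mc i)) ** mc i ** (mat 1 + (hh i / 2) *\<^sub>R B (mc i))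
          \<and> ct (gr i) ** pr i
              = (mat 1 + (hh i / 2) *\<^sub>R B (mc i)) ** mc i ** (mat 1 - (hh i / 2) *\<^sub>R B (mc i))
          \<and> mc i = ct ((1/2::real) *\<^sub>R (gr (i - 1) + gr i)) ** ((1/2::real) *\<^sub>R (pr (i - 1) + pr i)))
      \<and> gr s = gr 0 ** oprod (\<lambda>i. cay (hh i *\<^sub>R ct (B (mc i)))) s
      \<and> pr s = pr 0 ** oprod (\<lambda>i. matrix_inv (cay (hh i *\<^sub>R B (mc i)))) s"
proof -
  have each: "\<forall>i\<in>{1..s}.
            gr i = gr (i - 1) ** cay (hh i *\<^sub>R ct (B (mc i)))
          \<and> pr i = pr (i - 1) ** matrix_inv (cay (hh i *\<^sub>R B (mc i)))
          \<and> ct (gr i) ** pr i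
              = cay (hh i *\<^sub>R B (mc i)) ** (ct (gr (i - 1)) ** pr (i - 1))
                  ** matrix_inv (cay (hh i *\<^sub>R B (mc i)))
          \<and> mc i = matrix_inv (mat 1 - (hh i / 2) *\<^sub>R B (mc i)) ** (ct (gr (i - 1)) ** pr (i - 1))
                  ** matrix_inv (mat 1 + (hh i / 2) *\<^sub>R B (mc i))
          \<and> ct (gr (i - 1)) ** pr (i - 1)
              = (mat 1 - (hh i / 2) *\<^sub>R B (mc i)) ** mc i ** (mat 1 + (hh i / 2) *\<^sub>R B (mc i))
          \<and> ct (gr i) ** pr i
              = (mat 1 + (hh i / 2) *\<^sub>R B (mc i)) ** mc i ** (mat 1 - (hh i / 2) *\<^sub>R B (mc i))
          \<and> mc i = ct ((1/2::real) *\<^sub>R (gr (i - 1) + gr i)) ** ((1/2::real) *\<^sub>R (pr (i - 1) + pr i))" (is "\<forall>i\<in>_. ?P i")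
  proof
    fix i assume i: "i \<in> {1..s}"
    show "?P i"
      by (rule step_lemma[OF refl mc_def[OF i] kg_eq[OF i] kp_eq[OF i] gr_step[OF i] pr_step[OF i]
            inv_minus[OF i] inv_plus[OF i]])
  qed
  have prod: "k \<le> s \<Longrightarrow> gr k = gr 0 ** oprod (\<lambda>i. cay (hh i *\<^sub>R ct (B (mc i)))) k
      \<and> pr k = pr 0 ** oprod (\<lambda>i. matrix_inv (cay (hh i *\<^sub>R B (mc i)))) k" for k
  proof (induction k)
    case 0 then show ?case by simp
  next
    case (Suc k)
    hence "Suc k \<in> {1..s}" by simp
    note e = bspec[OF each this, unfolded diff_Suc_1]
    have "gr (Suc k) = gr k ** cay (hh (Suc k) *\<^sub>R ct (B (mc (Suc k))))" using e by blast
    moreover have "pr (Suc k) = pr k ** matrix_inv (cay (hh (Suc k) *\<^sub>R B (mc (Suc k))))"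
      using e by blast
    ultimately show ?case using Suc by (simp add: matrix_mul_assoc)
  qed
  show ?thesis using each prod[of s] by blast
qed

end
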